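(* Let $\psi\in\mathcal K$ have radius of convergence $R_\psi>0$ and Khinchin family $(Y_t)$, and let $g(z)=\sum_{n\ge1}A_nz^n$ be the solution of Lagrange's equation $g(z)=z\psi(g(z))$. For $t\in(0,R_\psi)$ let $q(t)$ be the extinction probability of the Bienaymé–Galton–Watson process with offspring distribution $Y_t$. Then $$q(t)=\sum_{n=1}^\infty\frac{A_nt^{n-1}}{\psi(t)^n}=\frac{g(t/\psi(t))}{t}\qquad\text{for every }t\in(0,R_\psi).$$
   Context: $\mathcal K$ is the class of non-constant power series $f(z)=\sum_{n\ge0}a_nz^n$ with positive radius of convergence $R$, non-negative coefficients and $a_0>0$; its Khinchin family $(X_t)_{t\in[0,R)}$ is given by $\mathbf P(X_t=n)=a_nt^n/f(t)$ for $n\ge0$, $t\in(0,R)$. The solution $g$ of Lagrange's equation with data $\psi$ is the unique power series satisfying $g(z)=z\psi(g(z))$; its coefficients are non-negative, $A_0=0$. (When $t/\psi(t)$ equals the radius of convergence of $g$, $g(t/\psi(t))$ denotes the value of the convergent series there.) The extinction probability is the probability that the Galton–Watson tree is finite. *)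

theory Defs
  imports "HOL-Probability.Probability" "HOL-Computational_Algebra.Formal_Power_Series"
begin

definition pseries :: "(nat \<Rightarrow> real) \<Rightarrow> real \<Rightarrow> real" where
  "pseries a x = (\<Sum>n. a n * x ^ n)"

definition class_K :: "(nat \<Rightarrow> real) \<Rightarrow> bool" where
  "class_K a \<longleftrightarrow> (\<forall>n. a n \<ge> 0) \<and> a 0 > 0 \<and> (\<exists>n>0. a n \<noteq> 0)
      \<and> conv_radius a > 0"

definition khinchin :: "(nat \<Rightarrow> real) \<Rightarrow> real \<Rightarrow> nat pmf" where
  "khinchin a t = embed_pmf (\<lambda>n. a n * t ^ n / pseries a t)"

fun iid_sum :: "nat pmf \<Rightarrow> nat \<Rightarrow> nat pmf" where
  "iid_sum p 0 = return_pmf 0"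
| "iid_sum p (Suc k) = bind_pmf p (\<lambda>x. map_pmf (\<lambda>y. x + y) (iid_sum p k))"

text \<open>Law of the generation size Z_n of the Bienayme-Galton-Watson process with
offspring law p, started from one individual: Z_0 = 1 and Z_(n+1) is a sum of
Z_n independent copies of the offspring variable.\<close>

fun gw_generation :: "nat pmf \<Rightarrow> nat \<Rightarrow> nat pmf" where
  "gw_generation p 0 = return_pmf 1"
| "gw_generation p (Suc n) = bind_pmf (gw_generation p n) (iid_sum p)"

text \<open>Extinction probability: the tree is finite iff Z_n = 0 for some n; these
events increase in n, so the probability is the limit of P(Z_n = 0).\<close>

definition extinction_prob :: "nat pmf \<Rightarrow> real" where
  "extinction_prob p = lim (\<lambda>n. pmf (gw_generation p n) 0)"

definition lagrange_sol :: "(nat \<Rightarrow> real) \<Rightarrow> real fps" where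
  "lagrange_sol psi = (THE G. fps_nth G 0 = 0 \<and> G = fps_X * fps_compose (Abs_fps psi) G)"

end

theory Submission
  imports Defs "HOL-Analysis.FPS_Convergence"
begin
unbundle no vec_syntax
unbundle fps_syntax


lemma pseries_eval: "pseries psi x = eval_fps (Abs_fps psi) x"
  by (simp add: pseries_def eval_fps_def)

lemma ps_sums:
  assumes "ereal \<bar>x\<bar> < conv_radius psi"
  shows "(\<lambda>n. psi n * x ^ n) sums pseries psi x"
  unfolding pseries_def using assms
  by (intro summable_sums summable_in_conv_radius) simp

lemma ps_mono:
  assumes "\<And>n. psi n \<ge> 0" "0 \<le> a" "a \<le> b" "ereal b < conv_radius psi"
  shows "pseries psi a \<le> pseries psi b"
proof -
  have sa: "(\<lambda>n. psi n * a ^ n) sums pseries psi a" using assms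
    by (intro ps_sums) (auto intro: le_less_trans[of "ereal a" "ereal b"])
  have sb: "(\<lambda>n. psi n * b ^ n) sums pseries psi b" using assms
    by (intro ps_sums) auto
  show ?thesis
    using sums_le[OF _ sa sb] assms by (simp add: mult_left_mono power_mono)
qed

lemma ps_ge0:
  assumes "\<And>n. psi n \<ge> 0" "0 \<le> a" "ereal a < conv_radius psi"
  shows "pseries psi a \<ge> psi 0"
proof -
  have sa: "(\<lambda>n. psi n * a ^ n) sums pseries psi a" using assms
    by (intro ps_sums) auto
  have "(\<Sum>n<1. psi n * a ^ n) \<le> pseries psi a"
    using sum_le_suminf[OF sums_summable[OF sa], of "{..<1}"] assms sums_unique[OF sa]
    by simp
  thus ?thesis by simp
qed

lemma ps_isCont:
  assumes "ereal \<bar>x\<bar> < conv_radius psi"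
  shows "isCont (pseries psi) x"
proof -
  have "continuous_on (eball 0 (fps_conv_radius (Abs_fps psi))) (eval_fps (Abs_fps psi))"
    by (rule continuous_on_eval_fps)
  moreover have "x \<in> eball 0 (fps_conv_radius (Abs_fps psi))"
    using assms by (simp add: fps_conv_radius_def)
  ultimately have "isCont (eval_fps (Abs_fps psi)) x"
    using continuous_on_eq_continuous_at open_eball by blast
  moreover have "pseries psi = eval_fps (Abs_fps psi)" by (rule ext) (simp add: pseries_eval)
  ultimately show ?thesis by simp
qed

lemma khinchin_pmf:
  assumes K: "class_K psi" and t: "0 < t" "ereal t < conv_radius psi"
  shows "pmf (khinchin psi t) n = psi n * t ^ n / pseries psi t"
proof -
  have nn: "\<And>n. psi n \<ge> 0" and p0: "psi 0 > 0" using K by (auto simp: class_K_def)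
  have pos: "pseries psi t > 0" using ps_ge0[of psi t] nn p0 t by force
  have s: "(\<lambda>n. psi n * t ^ n) sums pseries psi t" using t by (intro ps_sums) auto
  have s2: "(\<lambda>n. psi n * t ^ n / pseries psi t) sums 1"
    using sums_divide[OF s, of "pseries psi t"] pos by simp
  have f0: "\<And>n. 0 \<le> psi n * t ^ n / pseries psi t" using nn t pos by simp
  have "(\<integral>\<^sup>+x. ennreal (psi x * t ^ x / pseries psi t) \<partial>count_space UNIV) = 1"
    by (subst nn_integral_count_space_nat, subst suminf_ennreal2)
       (use f0 s2 in \<open>auto simp: sums_iff\<close>)
  then show ?thesis unfolding khinchin_def
    by (subst pmf_embed_pmf) (use f0 in auto)
qed

definition phi :: "(nat \<Rightarrow> real) \<Rightarrow> real \<Rightarrow> real \<Rightarrow> real" where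
  "phi psi t s = pseries psi (t * s) / pseries psi t"

lemma khinchin_pgf:
  assumes K: "class_K psi" and t: "0 < t" "ereal t < conv_radius psi" and s: "0 \<le> s" "s \<le> 1"
  shows "(\<integral>\<^sup>+n. ennreal (s ^ n) \<partial>measure_pmf (khinchin psi t)) = ennreal (phi psi t s)"
proof -
  have nn: "\<And>n. psi n \<ge> 0" and p0: "psi 0 > 0" using K by (auto simp: class_K_def)
  have pos: "pseries psi t > 0" using ps_ge0[of psi t] nn p0 t by force
  have ts: "ereal \<bar>t * s\<bar> < conv_radius psi"
    using t s by (intro le_less_trans[OF _ t(2)]) (auto simp: mult_left_le abs_mult)
  have sm: "(\<lambda>n. psi n * (t * s) ^ n) sums pseries psi (t * s)" using ts by (intro ps_sums)
  have sm2: "(\<lambda>n. psi n * t ^ n / pseries psi t * s ^ n) sums phi psi t s"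
    using sums_divide[OF sm, of "pseries psi t"] unfolding phi_def
    by (simp add: power_mult_distrib field_simps)
  have f0: "\<And>n. 0 \<le> psi n * t ^ n / pseries psi t * s ^ n" using nn t pos s by simp
  have "(\<integral>\<^sup>+n. ennreal (s ^ n) \<partial>measure_pmf (khinchin psi t))
      = (\<integral>\<^sup>+n. ennreal (psi n * t ^ n / pseries psi t * s ^ n) \<partial>count_space UNIV)"
    unfolding nn_integral_measure_pmf khinchin_pmf[OF K t]
    by (intro nn_integral_cong) (use nn t pos s in \<open>simp add: ennreal_mult''[symmetric]\<close>)
  also have "\<dots> = ennreal (phi psi t s)"
    by (subst nn_integral_count_space_nat, subst suminf_ennreal2)
       (use f0 sm2 in \<open>auto simp: sums_iff\<close>)
  finally show ?thesis .
qed

lemma iid_sum_pgf: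
  assumes "0 \<le> s" "(\<integral>\<^sup>+n. ennreal (s ^ n) \<partial>measure_pmf p) = ennreal c" "0 \<le> c"
  shows "(\<integral>\<^sup>+n. ennreal (s ^ n) \<partial>measure_pmf (iid_sum p k)) = ennreal (c ^ k)"
proof (induction k)
  case 0
  then show ?case by simp
next
  case (Suc k)
  have "(\<integral>\<^sup>+n. ennreal (s ^ n) \<partial>measure_pmf (iid_sum p (Suc k)))
      = (\<integral>\<^sup>+x. (\<integral>\<^sup>+y. ennreal (s ^ x) * ennreal (s ^ y) \<partial>measure_pmf (iid_sum p k)) \<partial>measure_pmf p)"
    using assms by (simp add: power_add ennreal_mult'')
  also have "\<dots> = (\<integral>\<^sup>+x. ennreal (s ^ x) * ennreal (c ^ k) \<partial>measure_pmf p)"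
    by (subst nn_integral_cmult) (simp_all add: Suc)
  also have "\<dots> = ennreal c * ennreal (c ^ k)"
    by (subst nn_integral_multc) (simp_all add: assms)
  also have "\<dots> = ennreal (c ^ Suc k)" using assms by (simp add: ennreal_mult'')
  finally show ?case .
qed

lemma gw_pgf:
  assumes pg: "\<And>s. 0 \<le> s \<Longrightarrow> s \<le> 1 \<Longrightarrow> (\<integral>\<^sup>+n. ennreal (s ^ n) \<partial>measure_pmf p) = ennreal (f s)"
    and fr: "\<And>s. 0 \<le> s \<Longrightarrow> s \<le> 1 \<Longrightarrow> 0 \<le> f s \<and> f s \<le> 1"
  shows "0 \<le> s \<Longrightarrow> s \<le> 1 \<Longrightarrow> (\<integral>\<^sup>+n. ennreal (s ^ n) \<partial>measure_pmf (gw_generation p m)) = ennreal ((f ^^ m) s)"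
proof (induction m arbitrary: s)
  case 0
  then show ?case by simp
next
  case (Suc m)
  have "(\<integral>\<^sup>+n. ennreal (s ^ n) \<partial>measure_pmf (gw_generation p (Suc m)))
      = (\<integral>\<^sup>+x. ennreal (f s ^ x) \<partial>measure_pmf (gw_generation p m))"
    using Suc.prems fr pg by (simp add: iid_sum_pgf)
  also have "\<dots> = ennreal ((f ^^ m) (f s))" using Suc fr by auto
  finally show ?case by (simp only: funpow_Suc_right comp_apply)
qed

lemma pmf0_pgf: "ennreal (pmf p (0::nat)) = (\<integral>\<^sup>+n. ennreal ((0::real) ^ n) \<partial>measure_pmf p)"
proof -
  have "(\<integral>\<^sup>+n. ennreal ((0::real) ^ n) \<partial>measure_pmf p) = (\<integral>\<^sup>+n. indicator {0} n \<partial>measure_pmf p)"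
    by (intro nn_integral_cong) (auto simp: indicator_def)
  also have "\<dots> = emeasure (measure_pmf p) {0}" by simp
  finally show ?thesis by (simp add: emeasure_pmf_single)
qed



lemma lagrange_char:
  fixes psi :: "nat \<Rightarrow> real" and H :: "real fps"
  assumes p0: "psi 0 \<noteq> 0"
  defines "F \<equiv> fps_X * inverse (Abs_fps psi)"
  assumes H0: "H $ 0 = 0" and HE: "H = fps_X * (Abs_fps psi oo H)"
  shows "F oo H = fps_X"
proof -
  have "F oo H = (fps_X oo H) * (inverse (Abs_fps psi) oo H)"
    unfolding F_def by (rule fps_compose_mult_distrib[OF H0])
  also have "\<dots> = H * inverse (Abs_fps psi oo H)"
    using H0 p0 by (simp add: fps_inverse_compose)
  also have "\<dots> = fps_X * ((Abs_fps psi oo H) * inverse (Abs_fps psi oo H))"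
    by (subst HE) (simp add: mult.assoc)
  also have "(Abs_fps psi oo H) * inverse (Abs_fps psi oo H) = 1"
    using p0 by (intro inverse_mult_eq_1') simp
  finally show ?thesis by simp
qed

lemma lagrange_sol_props:
  fixes psi :: "nat \<Rightarrow> real"
  assumes p0: "psi 0 \<noteq> 0"
  shows "lagrange_sol psi $ 0 = 0 \<and> lagrange_sol psi = fps_X * (Abs_fps psi oo lagrange_sol psi)"
proof -
  define F where "F = fps_X * inverse (Abs_fps psi)"
  define G where "G = fps_inv F"
  have F0: "F $ 0 = 0" and F1: "F $ 1 \<noteq> 0" using p0 by (simp_all add: F_def)
  have G0: "G $ 0 = 0" by (simp add: G_def fps_inv_def)
  have FG: "F oo G = fps_X" unfolding G_def by (rule fps_inv_right[OF F0 F1])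
  have "F oo G = (fps_X oo G) * (inverse (Abs_fps psi) oo G)"
    unfolding F_def by (rule fps_compose_mult_distrib[OF G0])
  also have "\<dots> = G * inverse (Abs_fps psi oo G)"
    using G0 p0 by (simp add: fps_inverse_compose)
  finally have "G * inverse (Abs_fps psi oo G) = fps_X" using FG by simp
  hence "G * inverse (Abs_fps psi oo G) * (Abs_fps psi oo G) = fps_X * (Abs_fps psi oo G)" by simp
  moreover have "inverse (Abs_fps psi oo G) * (Abs_fps psi oo G) = 1"
    using p0 by (intro inverse_mult_eq_1) simp
  ultimately have GE: "G = fps_X * (Abs_fps psi oo G)" by (simp add: mult.assoc)
  have uniq: "H = G" if H0: "H $ 0 = 0" and HE: "H = fps_X * (Abs_fps psi oo H)" for H :: "real fps"
  proof -
    have FH: "F oo H = fps_X" unfolding F_def by (rule lagrange_char[OF p0 H0 HE])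
    have "G oo (F oo H) = G oo F oo H" by (rule fps_compose_assoc[OF H0 F0])
    also have "G oo F = fps_X" unfolding G_def by (rule fps_inv[OF F0 F1])
    finally show ?thesis using FH H0 by simp
  qed
  have LG: "lagrange_sol psi = G"
    unfolding lagrange_sol_def
  proof (rule the_equality)
    show "G $ 0 = 0 \<and> G = fps_X * (Abs_fps psi oo G)" by (intro conjI G0 GE)
    fix H assume "H $ 0 = 0 \<and> H = fps_X * (Abs_fps psi oo H)"
    thus "H = G" using uniq by blast
  qed
  show ?thesis unfolding LG by (intro conjI G0 GE)
qed

lemma pow_nth_local:
  fixes P Q :: "real fps"
  shows "(\<forall>j\<le>n. P $ j = Q $ j) \<Longrightarrow> (P ^ i) $ n = (Q ^ i) $ n"
proof (induction i arbitrary: n)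
  case 0 thus ?case by simp
next
  case (Suc i)
  show ?case unfolding power_Suc fps_mult_nth
    by (intro sum.cong refl) (use Suc in auto)
qed

lemma pow_nth_nonneg:
  fixes P :: "real fps"
  shows "(\<forall>j\<le>n. P $ j \<ge> 0) \<Longrightarrow> (P ^ i) $ n \<ge> 0"
proof (induction i arbitrary: n)
  case 0 thus ?case by simp
next
  case (Suc i)
  show ?case unfolding power_Suc fps_mult_nth
    by (intro sum_nonneg mult_nonneg_nonneg) (use Suc in auto)
qed

lemma pow_nth_mono:
  fixes P Q :: "real fps"
  shows "(\<forall>j\<le>n. 0 \<le> P $ j \<and> P $ j \<le> Q $ j) \<Longrightarrow> (P ^ i) $ n \<le> (Q ^ i) $ n"
proof (induction i arbitrary: n)
  case 0 thus ?case by simp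
next
  case (Suc i)
  show ?case unfolding power_Suc fps_mult_nth
  proof (intro sum_mono mult_mono)
    fix j assume j: "j \<in> {0..n}"
    show "P $ j \<le> Q $ j" using Suc.prems j by auto
    show "(P ^ i) $ (n - j) \<le> (Q ^ i) $ (n - j)" using Suc j by auto
    show "0 \<le> Q $ j" using Suc.prems j by force
    show "0 \<le> (P ^ i) $ (n - j)" by (rule pow_nth_nonneg) (use Suc.prems in auto)
  qed
qed

lemma comp_nth_local:
  fixes P Q a :: "real fps"
  shows "(\<forall>j\<le>n. P $ j = Q $ j) \<Longrightarrow> (a oo P) $ n = (a oo Q) $ n"
  unfolding fps_compose_nth by (intro sum.cong refl) (simp add: pow_nth_local)

lemma comp_nth_nonneg:
  fixes P a :: "real fps"
  shows "(\<forall>j. a $ j \<ge> 0) \<Longrightarrow> (\<forall>j\<le>n. P $ j \<ge> 0) \<Longrightarrow> (a oo P) $ n \<ge> 0"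
  unfolding fps_compose_nth by (intro sum_nonneg mult_nonneg_nonneg) (auto intro: pow_nth_nonneg)

lemma comp_nth_mono:
  fixes P Q a :: "real fps"
  shows "(\<forall>j. a $ j \<ge> 0) \<Longrightarrow> (\<forall>j\<le>n. 0 \<le> P $ j \<and> P $ j \<le> Q $ j) \<Longrightarrow> (a oo P) $ n \<le> (a oo Q) $ n"
  unfolding fps_compose_nth by (intro sum_mono mult_left_mono) (auto intro: pow_nth_mono)

definition tr :: "(nat \<Rightarrow> real) \<Rightarrow> nat \<Rightarrow> real fps" where
  "tr A N = Abs_fps (\<lambda>k. if k \<le> N then A k else 0)"

lemma tr_radius: "fps_conv_radius (tr A N) = \<infinity>"
proof -
  have "conv_radius (fps_nth (tr A N)) = conv_radius (\<lambda>_. 0 :: real)"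
    by (rule conv_radius_cong) (auto simp: tr_def eventually_at_top_linorder intro!: exI[of _ "Suc N"])
  thus ?thesis by (simp add: fps_conv_radius_def)
qed

lemma tr_eval: "eval_fps (tr A N) x = (\<Sum>k\<le>N. A k * x ^ k)"
proof -
  have "(\<lambda>k. (tr A N) $ k * x ^ k) sums eval_fps (tr A N) x"
    by (rule sums_eval_fps) (simp add: tr_radius)
  moreover have "(\<lambda>k. (tr A N) $ k * x ^ k) sums (\<Sum>k\<le>N. (tr A N) $ k * x ^ k)"
    by (rule sums_finite) (auto simp: tr_def)
  ultimately show ?thesis using sums_unique2 by (force simp: tr_def)
qed

lemma pseries_sums:
  assumes "ereal \<bar>x\<bar> < conv_radius psi"
  shows "(\<lambda>n. psi n * x ^ n) sums pseries psi x"
  unfolding pseries_def using assms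
  by (intro summable_sums summable_in_conv_radius) simp

lemma comp_eval:
  fixes P :: "real fps"
  assumes nn: "\<And>n. psi n \<ge> 0" and P0: "P $ 0 = 0" and Pn: "\<And>k. P $ k \<ge> 0"
    and Pr: "fps_conv_radius P = \<infinity>" and x: "x \<ge> 0"
    and sr: "ereal (eval_fps P x) < conv_radius psi"
  shows "(\<lambda>m. (Abs_fps psi oo P) $ m * x ^ m) sums pseries psi (eval_fps P x)"
proof -
  define s where "s = eval_fps P x"
  have sP: "(\<lambda>n. P $ n * x ^ n) sums s" unfolding s_def by (rule sums_eval_fps) (simp add: Pr)
  have s0: "s \<ge> 0" using sums_le[of "\<lambda>_. 0", OF _ sums_zero sP] Pn x by simp
  define a where "a = (\<lambda>(i,m). psi i * (P ^ i) $ m * x ^ m)"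
  have a0: "a (i,m) \<ge> 0" for i m
    unfolding a_def using nn x pow_nth_nonneg[of _ P] Pn by simp
  have row: "((\<lambda>m. a (i,m)) has_sum (psi i * s ^ i)) UNIV" for i
  proof -
    have "(\<lambda>m. (P ^ i) $ m * x ^ m) sums eval_fps (P ^ i) x"
      by (rule sums_eval_fps) (use fps_conv_radius_power[of P i] Pr in auto)
    moreover have "eval_fps (P ^ i) x = s ^ i" unfolding s_def
      by (rule eval_fps_power) (simp add: Pr)
    ultimately have "(\<lambda>m. psi i * ((P ^ i) $ m * x ^ m)) sums (psi i * s ^ i)"
      by (intro sums_mult) simp
    hence "(\<lambda>m. a (i,m)) sums (psi i * s ^ i)" by (simp add: a_def mult.assoc)
    thus ?thesis by (rule sums_nonneg_imp_has_sum) (rule a0)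
  qed
  have gs: "((\<lambda>i. psi i * s ^ i) has_sum pseries psi s) UNIV"
    by (rule sums_nonneg_imp_has_sum) (use pseries_sums[of s psi] sr s0 nn in \<open>auto simp: s_def\<close>)
  have summ: "a summable_on (UNIV \<times> UNIV)"
    by (rule summable_on_SigmaI[where g = "\<lambda>i. psi i * s ^ i"]) (use row gs a0 in \<open>auto simp: summable_on_def\<close>)
  have hs: "(a has_sum pseries psi s) (UNIV \<times> UNIV)"
    by (rule has_sum_SigmaI[where g = "\<lambda>i. psi i * s ^ i"]) (use row gs summ in auto)
  hence hs': "((\<lambda>(m,i). a (i,m)) has_sum pseries psi s) (UNIV \<times> UNIV)"
    using has_sum_swap by blast
  have col: "((\<lambda>i. a (i,m)) has_sum ((Abs_fps psi oo P) $ m * x ^ m)) UNIV" for m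
  proof (rule has_sum_finite_neutralI[of "{0..m}"])
    show "a (i,m) = 0" if "i \<in> UNIV - {0..m}" for i
      using that startsby_zero_power_prefix[OF P0, of i] by (auto simp: a_def)
    show "(Abs_fps psi oo P) $ m * x ^ m = (\<Sum>i\<in>{0..m}. a (i,m))"
      by (simp add: a_def fps_compose_nth sum_distrib_right)
  qed auto
  have "((\<lambda>m. (Abs_fps psi oo P) $ m * x ^ m) has_sum pseries psi s) UNIV"
    by (rule has_sum_SigmaD[OF hs']) (use col in simp)
  thus ?thesis unfolding s_def by (rule has_sum_imp_sums)
qed



lemma phi_props:
  assumes K: "class_K psi" and t: "0 < t" "ereal t < conv_radius psi"
  shows "pseries psi t > 0"
    and "\<And>s. 0 \<le> s \<Longrightarrow> s \<le> 1 \<Longrightarrow> 0 \<le> phi psi t s \<and> phi psi t s \<le> 1"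
    and "\<And>a b. 0 \<le> a \<Longrightarrow> a \<le> b \<Longrightarrow> b \<le> 1 \<Longrightarrow> phi psi t a \<le> phi psi t b"
    and "phi psi t 1 = 1"
proof -
  have nn: "\<And>n. psi n \<ge> 0" and p0: "psi 0 > 0" using K by (auto simp: class_K_def)
  show pos: "pseries psi t > 0" using ps_ge0[of psi t] nn p0 t by force
  have mono: "phi psi t a \<le> phi psi t b" if "0 \<le> a" "a \<le> b" "b \<le> 1" for a b
  proof -
    have "t * b \<le> t" using that t by (simp add: mult_left_le)
    hence "ereal (t * b) < conv_radius psi" using t by (intro le_less_trans[OF _ t(2)]) simp
    hence "pseries psi (t * a) \<le> pseries psi (t * b)"
      using that t by (intro ps_mono nn) (auto intro: mult_left_mono)
    thus ?thesis unfolding phi_def using pos by (simp add: divide_right_mono)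
  qed
  show "\<And>a b. 0 \<le> a \<Longrightarrow> a \<le> b \<Longrightarrow> b \<le> 1 \<Longrightarrow> phi psi t a \<le> phi psi t b" by (rule mono)
  show one: "phi psi t 1 = 1" unfolding phi_def using pos by simp
  show "0 \<le> phi psi t s \<and> phi psi t s \<le> 1" if "0 \<le> s" "s \<le> 1" for s
  proof
    have "ereal (t * s) < conv_radius psi"
      using that t by (intro le_less_trans[OF _ t(2)]) (simp add: mult_left_le)
    hence "pseries psi (t * s) \<ge> psi 0" using that t by (intro ps_ge0 nn) auto
    thus "0 \<le> phi psi t s" unfolding phi_def using pos p0 by simp
    show "phi psi t s \<le> 1" using mono[of s 1] that one by simp
  qed
qed

lemma extinction:
  assumes K: "class_K psi" and t: "0 < t" "ereal t < conv_radius psi"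
  defines "q \<equiv> extinction_prob (khinchin psi t)"
  shows "0 \<le> q" "q \<le> 1" "phi psi t q = q"
    and "\<And>r. 0 \<le> r \<Longrightarrow> r \<le> 1 \<Longrightarrow> phi psi t r = r \<Longrightarrow> q \<le> r"
proof -
  let ?f = "phi psi t"
  note P = phi_props[OF K t]
  define x where "x n = (?f ^^ n) 0" for n
  have x01: "0 \<le> x n \<and> x n \<le> 1" for n
    by (induction n) (auto simp: x_def P(2))
  have pmf_x: "pmf (gw_generation (khinchin psi t) n) 0 = x n" for n
  proof -
    have "ennreal (pmf (gw_generation (khinchin psi t) n) 0) = ennreal (x n)"
      unfolding pmf0_pgf x_def
      by (rule gw_pgf[OF khinchin_pgf[OF K t]]) (use P(2) in auto)
    thus ?thesis using x01 by simp
  qed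
  have xs: "x (Suc n) = ?f (x n)" for n by (simp add: x_def)
  have inc: "x n \<le> x (Suc n)" for n
  proof (induction n)
    case 0 thus ?case using x01[of 1] by (simp add: x_def)
  next
    case (Suc n) thus ?case unfolding xs[of "Suc n"] xs[of n] using x01[of n] P(2)[of "x n"] by (intro P(3)) auto
  qed
  have below: "x n \<le> r" if "0 \<le> r" "r \<le> 1" "?f r = r" for r n
  proof (induction n)
    case 0 thus ?case using that by (simp add: x_def)
  next
    case (Suc n) thus ?case using P(3)[of "x n" r] x01[of n] that by (simp add: xs)
  qed
  have "incseq x" using inc by (simp add: incseq_SucI)
  moreover have "bdd_above (range x)" using x01 by (intro bdd_aboveI[of _ 1]) auto
  ultimately have lim: "x \<longlonglongrightarrow> (SUP i. x i)" by (intro LIMSEQ_incseq_SUP)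
  hence qx: "x \<longlonglongrightarrow> q" unfolding q_def extinction_prob_def pmf_x
    by (simp add: limI)
  show q0: "0 \<le> q" using x01 by (intro LIMSEQ_le_const[OF qx]) auto
  show q1: "q \<le> 1" using x01 by (intro LIMSEQ_le_const2[OF qx]) auto
  show "q \<le> r" if "0 \<le> r" "r \<le> 1" "?f r = r" for r
    using below[OF that] by (intro LIMSEQ_le_const2[OF qx]) auto
  have "ereal \<bar>t * q\<bar> < conv_radius psi"
    using q0 q1 t by (intro le_less_trans[OF _ t(2)]) (simp add: mult_left_le abs_mult)
  hence "isCont (pseries psi) (t * q)" by (rule ps_isCont)
  hence "(\<lambda>n. pseries psi (t * x n)) \<longlonglongrightarrow> pseries psi (t * q)"
    by (rule isCont_tendsto_compose) (intro tendsto_mult tendsto_const qx)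
  hence "(\<lambda>n. ?f (x n)) \<longlonglongrightarrow> ?f q" unfolding phi_def
    by (intro tendsto_divide tendsto_const) (use P(1) in auto)
  moreover have "(\<lambda>n. ?f (x n)) \<longlonglongrightarrow> q" using LIMSEQ_Suc[OF qx] by (simp add: xs)
  ultimately show "?f q = q" using LIMSEQ_unique by blast
qed



theorem theorem6p4:
  fixes psi :: "nat \<Rightarrow> real" and t :: real
  assumes "class_K psi"
    and "0 < t" and "ereal t < conv_radius psi"
  defines "A \<equiv> fps_nth (lagrange_sol psi)"
  shows "(\<lambda>n. A n * t ^ (n - 1) / pseries psi t ^ n) sums extinction_prob (khinchin psi t)
    \<and> extinction_prob (khinchin psi t) = pseries A (t / pseries psi t) / t"
proof -
  note K = assms(1) and t = assms(2,3)
  have nn: "\<And>n. psi n \<ge> 0" and p0: "psi 0 > 0" using K by (auto simp: class_K_def)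
  note P = phi_props[OF K t]
  note E = extinction[OF K t]
  define q where "q = extinction_prob (khinchin psi t)"
  define Pt where "Pt = pseries psi t"
  define w where "w = t / Pt"
  define u where "u = t * q"
  define G where "G = lagrange_sol psi"
  have Pt: "Pt > 0" using P(1) by (simp add: Pt_def)
  have w0: "w > 0" using Pt t by (simp add: w_def)
  have q01: "0 \<le> q" "q \<le> 1" using E by (simp_all add: q_def)
  have u0: "0 \<le> u" and ut: "u \<le> t" using q01 t by (simp_all add: u_def mult_left_le)
  have uR: "ereal u < conv_radius psi" using ut t by (intro le_less_trans[OF _ t(2)]) simp
  have ufix: "w * pseries psi u = u"
  proof -
    have "pseries psi (t * q) / Pt = q" using E(3) by (simp add: phi_def q_def Pt_def)
    thus ?thesis using Pt by (simp add: w_def u_def field_simps)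
  qed
  have GL: "G $ 0 = 0" "G = fps_X * (Abs_fps psi oo G)"
    using lagrange_sol_props[of psi] p0 by (simp_all add: G_def)
  have AG: "A n = G $ n" for n by (simp add: A_def G_def)
  have A0: "A 0 = 0" using GL by (simp add: AG)
  have ASuc: "A (Suc n) = (Abs_fps psi oo G) $ n" for n
    by (subst AG, subst GL(2)) simp
  have Ann: "A n \<ge> 0" for n
  proof (induction n rule: less_induct)
    case (less n)
    show ?case
    proof (cases n)
      case 0 thus ?thesis by (simp add: A0)
    next
      case (Suc m)
      have "(Abs_fps psi oo G) $ m \<ge> 0"
        by (rule comp_nth_nonneg) (use nn less Suc in \<open>auto simp: AG\<close>)
      thus ?thesis by (simp add: Suc ASuc)
    qed
  qed
  define v where "v N = eval_fps (tr A N) w" for N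
  have v_eq: "v N = (\<Sum>k\<le>N. A k * w ^ k)" for N by (simp add: v_def tr_eval)
  have v0: "v N \<ge> 0" for N unfolding v_eq using Ann w0 by (intro sum_nonneg) simp
  have tr0: "tr A N $ 0 = 0" for N by (simp add: tr_def A0)
  have trn: "tr A N $ k \<ge> 0" for N k by (simp add: tr_def Ann)
  have ce: "(\<lambda>m. (Abs_fps psi oo tr A N) $ m * w ^ m) sums pseries psi (v N)"
    if "ereal (v N) < conv_radius psi" for N
    unfolding v_def by (rule comp_eval) (use nn tr0 trn w0 that in \<open>auto simp: tr_radius v_def\<close>)
  have coef_eq: "A (Suc j) = (Abs_fps psi oo tr A N) $ j" if "j \<le> N" for j N
    unfolding ASuc by (rule comp_nth_local) (use that in \<open>auto simp: tr_def AG\<close>)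
  have coef_le: "(Abs_fps psi oo tr A N) $ m \<le> A (Suc m)" for m N
    unfolding ASuc by (rule comp_nth_mono) (use nn Ann in \<open>auto simp: tr_def AG\<close>)
  have cnn: "(Abs_fps psi oo tr A N) $ m \<ge> 0" for m N
    by (rule comp_nth_nonneg) (use nn trn in auto)
  have step: "v (Suc N) \<le> w * pseries psi (v N)" if "ereal (v N) < conv_radius psi" for N
  proof -
    have "v (Suc N) = (\<Sum>j\<le>N. A (Suc j) * w ^ Suc j)"
      unfolding v_eq by (subst sum.atMost_Suc_shift) (simp add: A0)
    also have "\<dots> = w * (\<Sum>j<Suc N. (Abs_fps psi oo tr A N) $ j * w ^ j)"
      by (simp add: sum_distrib_left coef_eq lessThan_Suc_atMost mult_ac)
    also have "\<dots> \<le> w * pseries psi (v N)"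
      using sum_le_suminf[OF sums_summable[OF ce[OF that]], of "{..<Suc N}"] sums_unique[OF ce[OF that]]
        cnn w0 by (intro mult_left_mono) auto
    finally show ?thesis .
  qed
  have vu: "v N \<le> u" for N
  proof (induction N)
    case 0 thus ?case using u0 by (simp add: v_eq A0)
  next
    case (Suc N)
    have R: "ereal (v N) < conv_radius psi" using Suc uR by (intro le_less_trans[OF _ uR]) simp
    have "v (Suc N) \<le> w * pseries psi (v N)" by (rule step[OF R])
    also have "\<dots> \<le> w * pseries psi u" using Suc v0 w0 nn uR by (intro mult_left_mono ps_mono) auto
    finally show ?case using ufix by simp
  qed
  have vR: "ereal (v N) < conv_radius psi" for N using vu uR by (intro le_less_trans[OF _ uR]) simp
  have tnn: "A n * w ^ n \<ge> 0" for n using Ann w0 by simp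
  have summ: "summable (\<lambda>n. A n * w ^ n)"
  proof (rule summableI_nonneg_bounded[OF tnn])
    fix n
    show "(\<Sum>i<n. A i * w ^ i) \<le> u"
    proof (cases n)
      case 0 thus ?thesis using u0 by simp
    next
      case (Suc m) thus ?thesis using vu[of m] by (simp add: v_eq lessThan_Suc_atMost)
    qed
  qed
  define S where "S = (\<Sum>n. A n * w ^ n)"
  have vS: "v \<longlonglongrightarrow> S" unfolding v_eq S_def by (rule summable_LIMSEQ'[OF summ])
  have S0: "S \<ge> 0" using v0 by (intro LIMSEQ_le_const[OF vS]) auto
  have Su: "S \<le> u" using vu by (intro LIMSEQ_le_const2[OF vS]) auto
  have SR: "ereal \<bar>S\<bar> < conv_radius psi" using S0 Su uR by (intro le_less_trans[OF _ uR]) simp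
  have lim2: "(\<lambda>N. w * pseries psi (v N)) \<longlonglongrightarrow> w * pseries psi S"
    by (intro tendsto_mult tendsto_const isCont_tendsto_compose[OF ps_isCont[OF SR] vS])
  have sS: "(\<lambda>m. A (Suc m) * w ^ Suc m) sums S"
    using summable_sums[OF summ] by (subst sums_Suc_iff) (simp add: S_def A0)
  have up: "w * pseries psi (v N) \<le> S" for N
  proof -
    have cs: "(\<lambda>m. (Abs_fps psi oo tr A N) $ m * w ^ m * w) sums (pseries psi (v N) * w)"
      by (intro sums_mult2 ce vR)
    have "pseries psi (v N) * w \<le> S"
    proof (rule sums_le[OF _ cs sS])
      fix m
      have "(Abs_fps psi oo tr A N) $ m * (w ^ m * w) \<le> A (Suc m) * (w ^ m * w)"
        using coef_le[of N m] w0 by (intro mult_right_mono) auto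
      thus "(Abs_fps psi oo tr A N) $ m * w ^ m * w \<le> A (Suc m) * w ^ Suc m"
        by (simp add: mult_ac)
    qed
    thus ?thesis by (simp add: mult_ac)
  qed
  have f1: "w * pseries psi S \<le> S" using up by (intro LIMSEQ_le_const2[OF lim2]) auto
  have f2: "S \<le> w * pseries psi S"
    by (rule LIMSEQ_le[OF LIMSEQ_Suc[OF vS] lim2]) (use step vR in auto)
  have Sfix: "w * pseries psi S = S" using f1 f2 by simp
  have "phi psi t (S / t) = S / t"
  proof -
    have "phi psi t (S / t) = pseries psi S / Pt" using t by (simp add: phi_def Pt_def)
    also have "\<dots> = S / t" using Sfix Pt t by (simp add: w_def field_simps)
    finally show ?thesis .
  qed
  moreover have "0 \<le> S / t" "S / t \<le> 1" using S0 Su ut t by simp_all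
  ultimately have "q \<le> S / t" using E(4) by (simp add: q_def)
  hence "u \<le> S" using t by (simp add: u_def field_simps)
  hence Su': "S = t * q" using Su by (simp add: u_def)
  have sq: "(\<lambda>n. A n * w ^ n / t) sums q"
    using sums_divide[OF summable_sums[OF summ], of t] t by (simp add: S_def[symmetric] Su')
  have terms: "A n * w ^ n / t = A n * t ^ (n - 1) / pseries psi t ^ n" for n
  proof (cases n)
    case 0 thus ?thesis by (simp add: A0)
  next
    case (Suc m) thus ?thesis using t Pt by (simp add: w_def Pt_def field_simps power_divide)
  qed
  have "pseries A w = S" by (simp add: pseries_def S_def)
  hence "pseries A (t / pseries psi t) / t = q" using Su' t by (simp add: w_def Pt_def)
  thus ?thesis using sq terms by (simp add: q_def)
qed


end
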